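(* Let $F:\mathbb{R}^p\to[0,M]$ and $\mathbf{r}=(\mathbf{r}_1,\dots,\mathbf{r}_Z):\mathbb{R}^p\to\mathbb{R}^Z$ be functions, let $B>0$, and let $\Lambda=\{\boldsymbol{\lambda}\in\mathbb{R}_+^{Z}:\|\boldsymbol{\lambda}\|_1\le B\}$. Define $G(w;\boldsymbol{\lambda})=F(w)+\boldsymbol{\lambda}^T\mathbf{r}(w)$ for $w\in\mathbb{R}^p$, $\boldsymbol{\lambda}\in\Lambda$. Let $\nu\ge 0$ and let $(\bar w,\bar{\boldsymbol{\lambda}})\in\mathbb{R}^p\times\Lambda$ be a $\nu$-approximate saddle point of $G$, i.e. $G(\bar w;\bar{\boldsymbol{\lambda}})\le G(w;\bar{\boldsymbol{\lambda}})+\nu$ for all $w\in\mathbb{R}^p$ and $G(\bar w;\bar{\boldsymbol{\lambda}})\ge G(\bar w;\boldsymbol{\lambda})-\nu$ for all $\boldsymbol{\lambda}\in\Lambda$. Assume there exists $w^*\in\mathbb{R}^p$ with $\mathbf{r}(w^* )\le \mathbf{0}_Z$ componentwise. Then $$\max_{1\le j\le Z}\,(\mathbf{r}_j(\bar w))_+\le \frac{M+2\nu}{B},$$ where $x_+=\max\{x,0\}$.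
   Context: In the paper, $F(w)=\frac1K\sum_{k=1}^K\frac1{m_k}\sum_{i=1}^{m_k} l(h_w(x_{k,i}),y_{k,i})$ is the empirical federated risk of a model with parameter $w$ (a nonnegative loss, assumed bounded by $M$), and $\mathbf{r}(w)\le 0$ encodes group-fairness constraints such as Bounded Group Loss; the Lagrangian-type objective is minimized over $w$ and maximized over $\boldsymbol{\lambda}$. *)

theory Defs
  imports "HOL-Analysis.Analysis"
begin

definition dual_set :: "real \<Rightarrow> (real ^ 'z) set" where
  "dual_set B = {l. (\<forall>j. 0 \<le> l $ j) \<and> (\<Sum>j\<in>UNIV. \<bar>l $ j\<bar>) \<le> B}"

definition lagr :: "('p \<Rightarrow> real) \<Rightarrow> ('p \<Rightarrow> real ^ 'z) \<Rightarrow> 'p \<Rightarrow> real ^ 'z \<Rightarrow> real" where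
  "lagr F r w l = F w + l \<bullet> r w"

end

theory Submission
  imports Defs
begin

theorem lemma1:
  fixes F :: "real ^ 'p \<Rightarrow> real"
    and r :: "real ^ 'p \<Rightarrow> real ^ 'z"
    and M B \<nu> :: real
    and wbar :: "real ^ 'p" and lbar :: "real ^ 'z"
  assumes F_range: "\<And>w. 0 \<le> F w \<and> F w \<le> M"
    and B_pos: "B > 0"
    and nu_nonneg: "\<nu> \<ge> 0"
    and lbar_in: "lbar \<in> dual_set B"
    and saddle_w: "\<And>w. lagr F r wbar lbar \<le> lagr F r w lbar + \<nu>"
    and saddle_l: "\<And>l. l \<in> dual_set B \<Longrightarrow> lagr F r wbar lbar \<ge> lagr F r wbar l - \<nu>"
    and feasible: "\<exists>wstar. \<forall>j. r wstar $ j \<le> 0"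
  shows "(MAX j\<in>UNIV. max (r wbar $ j) 0) \<le> (M + 2 * \<nu>) / B"
proof -
  obtain ws where ws: "\<forall>j. r ws $ j \<le> 0" using feasible by blast
  have M0: "0 \<le> M" using F_range[of ws] by linarith
  have lnn: "\<forall>j. 0 \<le> lbar $ j" using lbar_in by (simp add: dual_set_def)
  have "lbar \<bullet> r ws \<le> 0"
    unfolding inner_vec_def using lnn ws
    by (auto intro!: sum_nonpos simp: mult_nonneg_nonpos)
  hence up: "lagr F r wbar lbar \<le> M + \<nu>"
    using saddle_w[of ws] F_range[of ws] by (simp add: lagr_def)
  have bound: "max (r wbar $ j) 0 \<le> (M + 2 * \<nu>) / B" for j
  proof -
    define l :: "real ^ 'z" where "l = (\<chi> i. if i = j then B else 0)"
    have sumeq: "(\<Sum>i\<in>UNIV. \<bar>l $ i\<bar>) = B"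
      proof -
      have "(\<Sum>i\<in>UNIV. \<bar>l $ i\<bar>) = (\<Sum>i\<in>UNIV. if i = j then B else 0)"
        unfolding l_def using B_pos by (intro sum.cong) auto
      thus ?thesis by simp
    qed
    have "l \<in> dual_set B" using B_pos sumeq by (simp add: dual_set_def l_def)
    hence "lagr F r wbar lbar \<ge> lagr F r wbar l - \<nu>" by (rule saddle_l)
    moreover have "l \<bullet> r wbar = B * r wbar $ j"
      proof -
      have "l \<bullet> r wbar = (\<Sum>i\<in>UNIV. if i = j then B * r wbar $ j else 0)"
        unfolding inner_vec_def l_def by (intro sum.cong) auto
      thus ?thesis by simp
    qed
    ultimately have "F wbar + B * r wbar $ j - \<nu> \<le> M + \<nu>"
      using up by (simp add: lagr_def)
    hence "B * r wbar $ j \<le> M + 2 * \<nu>" using F_range[of wbar] by linarith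
    hence "r wbar $ j \<le> (M + 2 * \<nu>) / B" using B_pos by (simp add: field_simps)
    moreover have "0 \<le> (M + 2 * \<nu>) / B" using M0 nu_nonneg B_pos by simp
    ultimately show ?thesis by simp
  qed
  show ?thesis using bound by (simp add: Max_le_iff)
qed

end
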